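(* Let $G^1_k$ be the line policy graph on the domain $[k]=\{1,\dots,k\}$ (edges $(i,i+1)$ for $1\le i<k$, no vertex $\bot$), and let $\mathbf{R}_k$ be the workload of all one-dimensional range queries $\mathbf{q}(l,r)\mathbf{x}=\sum_{l\le i\le r}\mathbf{x}_i$, $1\le l\le r\le k$. Consider the mechanism that, on database $\mathbf{x}\in\mathbb{R}^k$ of (publicly known) size $n$, computes the prefix sums $s_i=\sum_{j\le i}\mathbf{x}_j$ for $1\le i\le k-1$, releases $\tilde s_i=s_i+\eta_i$ with $\eta_i$ independent $\mathrm{Lap}(1/\epsilon)$ random variables, sets $\tilde s_0=0$, $\tilde s_k=n$, and answers each query $\mathbf{q}(l,r)$ by $\tilde s_r-\tilde s_{l-1}$. This mechanism satisfies $(\epsilon,G^1_k)$-Blowfish privacy and answers $\mathbf{R}_k$ with $\Theta(1/\epsilon^2)$ error per query.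
   Context: Databases are histogram vectors $\mathbf{x}\in\mathbb{R}^k$ over $[k]$. Under $G^1_k$, two databases are neighbors iff they have the same size and differ in the value of exactly one record, which is $i$ in one and $i+1$ in the other. A mechanism $\mathcal{M}$ satisfies $(\epsilon,G)$-Blowfish privacy if $\Pr[\mathcal{M}(\mathbf{x})\in S]\le e^\epsilon\Pr[\mathcal{M}(\mathbf{x}')\in S]$ for all output sets $S$ and all neighbors $\mathbf{x},\mathbf{x}'$. $\mathrm{Lap}(\lambda)$ has density proportional to $\exp(-|t|/\lambda)$. The error per query is the data-independent mean squared error $\max_{\mathbf{x}}\sum_{\mathbf{q}\in\mathbf{R}_k}\mathbb{E}[(\mathbf{q}\mathbf{x}-\mathcal{M}(\mathbf{q},\mathbf{x}))^2]$ divided by the number of queries. *)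

theory Defs
  imports "HOL-Probability.Probability"
begin

text \<open>Databases are histograms over the domain [k] = {1..k}, represented as
  functions x :: nat => real (only the values at 1..k matter).\<close>

definition lap :: "real \<Rightarrow> real measure" where
  "lap b = density lborel (\<lambda>t. ennreal (exp (- \<bar>t\<bar> / b) / (2 * b)))"

definition noise :: "nat \<Rightarrow> real \<Rightarrow> (nat \<Rightarrow> real) measure" where
  "noise k \<epsilon> = PiM {1..<k} (\<lambda>_. lap (1 / \<epsilon>))"

definition range_queries :: "nat \<Rightarrow> (nat \<times> nat) set" where
  "range_queries k = {(l, r). 1 \<le> l \<and> l \<le> r \<and> r \<le> k}"

definition range_query :: "nat \<Rightarrow> nat \<Rightarrow> (nat \<Rightarrow> real) \<Rightarrow> real" where
  "range_query l r x = (\<Sum>i=l..r. x i)"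

definition db_size :: "nat \<Rightarrow> (nat \<Rightarrow> real) \<Rightarrow> real" where
  "db_size k x = (\<Sum>i=1..k. x i)"

definition prefix_sum :: "(nat \<Rightarrow> real) \<Rightarrow> nat \<Rightarrow> real" where
  "prefix_sum x i = (\<Sum>j=1..i. x j)"

definition noisy_prefix :: "nat \<Rightarrow> (nat \<Rightarrow> real) \<Rightarrow> (nat \<Rightarrow> real) \<Rightarrow> nat \<Rightarrow> real" where
  "noisy_prefix k x \<eta> i =
     (if i = 0 then 0 else if i = k then db_size k x else prefix_sum x i + \<eta> i)"

definition answer_space :: "nat \<Rightarrow> (nat \<times> nat \<Rightarrow> real) measure" where
  "answer_space k = PiM (range_queries k) (\<lambda>_. lborel)"

definition prefix_mech :: "nat \<Rightarrow> real \<Rightarrow> (nat \<Rightarrow> real) \<Rightarrow> (nat \<times> nat \<Rightarrow> real) measure" where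
  "prefix_mech k \<epsilon> x =
     distr (noise k \<epsilon>) (answer_space k)
       (\<lambda>\<eta>. \<lambda>q\<in>range_queries k. noisy_prefix k x \<eta> (snd q) - noisy_prefix k x \<eta> (fst q - 1))"

definition line_neighbors :: "nat \<Rightarrow> (nat \<Rightarrow> real) \<Rightarrow> (nat \<Rightarrow> real) \<Rightarrow> bool" where
  "line_neighbors k x x' \<longleftrightarrow>
     (\<exists>i. 1 \<le> i \<and> i < k \<and>
        (x' = x(i := x i - 1, Suc i := x (Suc i) + 1) \<or>
         x = x'(i := x' i - 1, Suc i := x' (Suc i) + 1)))"

definition blowfish_private ::
  "real \<Rightarrow> ('d \<Rightarrow> 'd \<Rightarrow> bool) \<Rightarrow> ('d \<Rightarrow> 'o measure) \<Rightarrow> bool" where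
  "blowfish_private \<epsilon> nb M \<longleftrightarrow>
     (\<forall>x x'. nb x x' \<longrightarrow>
        (\<forall>S \<in> sets (M x). measure (M x) S \<le> exp \<epsilon> * measure (M x') S))"

definition error_per_query :: "nat \<Rightarrow> real \<Rightarrow> real" where
  "error_per_query k \<epsilon> =
     (SUP x. (\<Sum>q\<in>range_queries k.
        \<integral>y. (range_query (fst q) (snd q) x - y q)\<^sup>2 \<partial>prefix_mech k \<epsilon> x))
     / real (card (range_queries k))"

end

theory Submission
  imports Defs
begin

definition lg :: "real \<Rightarrow> real \<Rightarrow> real" where
  "lg b t = exp (- \<bar>t\<bar> / b) / (2 * b)"

lemma lg_nonneg: "0 < b \<Longrightarrow> 0 \<le> lg b t"
  by (simp add: lg_def)

lemma lg_meas[measurable]: "lg b \<in> borel_measurable borel"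
  unfolding lg_def by measurable

lemma lap_lg: "lap b = density lborel (\<lambda>t. ennreal (lg b t))"
  by (simp add: lap_def lg_def)

lemma lap_nn_moment:
  assumes b: "0 < b"
  shows "(\<integral>\<^sup>+ t. ennreal (\<bar>t\<bar>^n * lg b t) \<partial>lborel) = ennreal (fact n * b^n)"
proof -
  let ?h = "\<lambda>t. ennreal (\<bar>t\<bar>^n * lg b t)"
  have l: "0 < 1/b" using b by simp
  have pos: "(\<integral>\<^sup>+ t. ?h t * indicator {0..} t \<partial>lborel) = ennreal (fact n * b^n / 2)"
  proof -
    have "(\<integral>\<^sup>+ t. ?h t * indicator {0..} t \<partial>lborel)
        = (\<integral>\<^sup>+ t. ennreal (1/2) * ennreal (erlang_density 0 (1/b) t * t ^ n) \<partial>lborel)"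
    proof (intro nn_integral_cong)
      fix t :: real
      show "?h t * indicator {0..} t = ennreal (1/2) * ennreal (erlang_density 0 (1/b) t * t ^ n)"
      proof (cases "t < 0")
        case True then show ?thesis by (simp add: erlang_density_def)
      next
        case False
        then have "?h t * indicator {0..} t = ennreal (1/2 * (erlang_density 0 (1/b) t * t ^ n))"
          using b by (simp add: lg_def erlang_density_def field_simps)
        also have "\<dots> = ennreal (1/2) * ennreal (erlang_density 0 (1/b) t * t ^ n)"
          using False b by (intro ennreal_mult) (auto simp: erlang_density_def)
        finally show ?thesis .
      qed
    qed
    also have "\<dots> = ennreal (1/2) * (\<integral>\<^sup>+ t. ennreal (erlang_density 0 (1/b) t * t ^ n) \<partial>lborel)"
      by (intro nn_integral_cmult) auto
    also have "\<dots> = ennreal (1/2) * ennreal (fact n / (1/b)^n)"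
      using nn_integral_erlang_ith_moment[OF l, of 0 n] by simp
    also have "\<dots> = ennreal (fact n * b^n / 2)"
      using b by (subst ennreal_mult[symmetric]) (auto simp: power_one_over field_simps)
    finally show ?thesis .
  qed
  have neg: "(\<integral>\<^sup>+ t. ?h t * indicator {..<0} t \<partial>lborel) = (\<integral>\<^sup>+ t. ?h t * indicator {0..} t \<partial>lborel)"
  proof -
    have "(\<integral>\<^sup>+ t. ?h t * indicator {..<0} t \<partial>lborel)
        = (\<integral>\<^sup>+ t. ?h (0 + -1 * t) * indicator {..<0} (0 + -1 * t) \<partial>lborel)"
      using nn_integral_real_affine[of "\<lambda>t. ?h t * indicator {..<0} t" "-1" 0] by simp
    also have "\<dots> = (\<integral>\<^sup>+ t. ?h t * indicator {0..} t \<partial>lborel)"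
      by (intro nn_integral_cong_AE, use AE_lborel_singleton[of 0] in eventually_elim)
        (auto simp: lg_def split: split_indicator)
    finally show ?thesis .
  qed
  have "(\<integral>\<^sup>+ t. ?h t \<partial>lborel) = (\<integral>\<^sup>+ t. ?h t * indicator {0..} t + ?h t * indicator {..<0} t \<partial>lborel)"
    by (intro nn_integral_cong) (auto split: split_indicator)
  also have "\<dots> = (\<integral>\<^sup>+ t. ?h t * indicator {0..} t \<partial>lborel) + (\<integral>\<^sup>+ t. ?h t * indicator {..<0} t \<partial>lborel)"
    by (intro nn_integral_add) auto
  also have "\<dots> = ennreal (fact n * b^n)"
    using b by (simp add: neg pos ennreal_plus[symmetric] del: ennreal_plus)
  finally show ?thesis .
qed

lemma prob_space_lap: "0 < b \<Longrightarrow> prob_space (lap b)"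
  apply (rule prob_spaceI)
  using lap_nn_moment[of b 0]
  by (simp add: lap_lg emeasure_density)

lemma lap_has_sq: assumes b: "0 < b"
  shows "has_bochner_integral lborel (\<lambda>t. lg b t * t\<^sup>2) (2 * b\<^sup>2)"
  apply (rule has_bochner_integral_nn_integral)
  using b lap_nn_moment[OF b, of 2]
  by (auto simp: lg_nonneg mult.commute)

lemma lap_int_lin: assumes b: "0 < b"
  shows "integrable lborel (\<lambda>t. lg b t * t)"
  apply (rule integrableI_bounded)
   apply measurable
  using b lap_nn_moment[OF b, of 1]
  by (auto simp: lg_nonneg abs_mult mult.commute)

lemma lap_int_lin0: assumes b: "0 < b"
  shows "integral\<^sup>L lborel (\<lambda>t. lg b t * t) = 0"
proof -
  have "integral\<^sup>L lborel (\<lambda>t. lg b t * t) = \<bar>-1\<bar> *\<^sub>R integral\<^sup>L lborel (\<lambda>t. lg b (0 + -1 * t) * (0 + -1 * t))"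
    by (rule lborel_integral_real_affine) auto
  also have "\<dots> = - integral\<^sup>L lborel (\<lambda>t. lg b t * t)"
    by (simp add: lg_def)
  finally show ?thesis by simp
qed

lemma lap_integrable_sq: assumes b: "0 < b" shows "integrable (lap b) (\<lambda>t. t\<^sup>2)"
proof -
  have "integrable lborel (\<lambda>t. lg b t * t\<^sup>2)"
    using lap_has_sq[OF b] by (rule integrable.intros)
  then show ?thesis unfolding lap_lg
    by (subst integrable_density) (auto simp: lg_nonneg b)
qed

lemma lap_integral_sq: "0 < b \<Longrightarrow> integral\<^sup>L (lap b) (\<lambda>t. t\<^sup>2) = 2 * b\<^sup>2"
  unfolding lap_lg using lap_has_sq[of b]
  by (subst integral_density) (auto simp: lg_nonneg has_bochner_integral_integral_eq)

lemma lap_integrable_lin: "0 < b \<Longrightarrow> integrable (lap b) (\<lambda>t. t)"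
  unfolding lap_lg using lap_int_lin[of b]
  by (subst integrable_density) (auto simp: lg_nonneg)

lemma lap_integral_lin: "0 < b \<Longrightarrow> integral\<^sup>L (lap b) (\<lambda>t. t) = 0"
  unfolding lap_lg using lap_int_lin0[of b]
  by (subst integral_density) (auto simp: lg_nonneg)

lemma lg_shift: assumes b: "0 < b" shows "lg b z \<le> exp (\<bar>c\<bar>/b) * lg b (z - c)"
proof -
  have "- \<bar>z\<bar> / b \<le> \<bar>c\<bar>/b + - \<bar>z - c\<bar> / b"
    using b by (simp add: field_simps)
  then have "exp (- \<bar>z\<bar> / b) \<le> exp (\<bar>c\<bar>/b) * exp (- \<bar>z - c\<bar> / b)"
    by (simp add: exp_add[symmetric])
  then show ?thesis using b unfolding lg_def by (simp add: divide_right_mono)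
qed

lemma lap_shift_nn:
  assumes b: "0 < b" and f[measurable]: "f \<in> borel_measurable borel"
  shows "(\<integral>\<^sup>+ y. f y \<partial>lap b) \<le> ennreal (exp (\<bar>c\<bar>/b)) * (\<integral>\<^sup>+ y. f (y + c) \<partial>lap b)"
proof -
  have "(\<integral>\<^sup>+ y. f y \<partial>lap b) = (\<integral>\<^sup>+ y. ennreal (lg b y) * f y \<partial>lborel)"
    unfolding lap_lg by (subst nn_integral_density) auto
  also have "\<dots> \<le> (\<integral>\<^sup>+ y. ennreal (exp (\<bar>c\<bar>/b)) * (ennreal (lg b (y - c)) * f y) \<partial>lborel)"
  proof (intro nn_integral_mono)
    fix y
    have "ennreal (lg b y) \<le> ennreal (exp (\<bar>c\<bar>/b) * lg b (y - c))"
      using lg_shift[OF b] by (rule ennreal_leI)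
    also have "\<dots> = ennreal (exp (\<bar>c\<bar>/b)) * ennreal (lg b (y - c))"
      using b by (intro ennreal_mult) (auto simp: lg_nonneg)
    finally show "ennreal (lg b y) * f y \<le> ennreal (exp (\<bar>c\<bar>/b)) * (ennreal (lg b (y - c)) * f y)"
      by (metis mult.assoc mult_right_mono zero_le)
  qed
  also have "\<dots> = ennreal (exp (\<bar>c\<bar>/b)) * (\<integral>\<^sup>+ y. ennreal (lg b (y - c)) * f y \<partial>lborel)"
    by (intro nn_integral_cmult) auto
  also have "(\<integral>\<^sup>+ y. ennreal (lg b (y - c)) * f y \<partial>lborel) = (\<integral>\<^sup>+ x. ennreal (lg b (c + 1 * x - c)) * f (c + 1 * x) \<partial>lborel)"
    using nn_integral_real_affine[of "\<lambda>y. ennreal (lg b (y - c)) * f y" 1 c] by simp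
  also have "\<dots> = (\<integral>\<^sup>+ y. f (y + c) \<partial>lap b)"
    unfolding lap_lg by (subst nn_integral_density) (auto simp: add.commute)
  finally show ?thesis .
qed

lemma noise_shift:
  fixes I :: "nat set" and b c :: real
  defines "P \<equiv> PiM I (\<lambda>_. lap b)"
  assumes I: "finite I" "i \<in> I" and b: "0 < b" and A: "A \<in> sets P"
  shows "emeasure P A \<le> ennreal (exp (\<bar>c\<bar>/b)) * emeasure P ((\<lambda>\<eta>. \<eta>(i := \<eta> i + c)) -` A \<inter> space P)"
proof -
  let ?T = "\<lambda>\<eta>::nat\<Rightarrow>real. \<eta>(i := \<eta> i + c)"
  obtain J where IJ: "I = insert i J" and iJ: "i \<notin> J" using mk_disjoint_insert[OF I(2)] by blast
  have fJ: "finite J" using I IJ by auto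
  interpret PS: product_sigma_finite "\<lambda>_. lap b"
    unfolding product_sigma_finite_def using prob_space_lap[OF b]
    by (simp add: prob_space_imp_sigma_finite)
  have Tm: "?T \<in> measurable P P"
    unfolding P_def
  proof (rule measurable_PiM_single')
    fix j assume "j \<in> I"
    show "(\<lambda>\<eta>. (\<eta>(i := \<eta> i + c)) j) \<in> measurable (PiM I (\<lambda>_. lap b)) (lap b)"
      using \<open>j \<in> I\<close> \<open>i \<in> I\<close> by (cases "j = i") (auto simp: lap_lg)
  next
    show "(\<lambda>\<eta> j. (\<eta>(i := \<eta> i + c)) j) \<in> space (PiM I (\<lambda>_. lap b)) \<rightarrow> (\<Pi>\<^sub>E j\<in>I. space (lap b))"
      using \<open>i \<in> I\<close> by (auto simp: space_PiM PiE_iff lap_lg)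
  qed
  have A': "A \<in> sets (PiM (insert i J) (\<lambda>_. lap b))" using A IJ unfolding P_def by simp
  have "emeasure P A = (\<integral>\<^sup>+ \<eta>. indicator A \<eta> \<partial>P)"
    using A by simp
  also have "\<dots> = (\<integral>\<^sup>+ x. (\<integral>\<^sup>+ y. indicator A (x(i := y)) \<partial>lap b) \<partial>PiM J (\<lambda>_. lap b))"
    unfolding P_def IJ using A' fJ iJ by (subst PS.product_nn_integral_insert) auto
  also have "\<dots> \<le> (\<integral>\<^sup>+ x. (\<integral>\<^sup>+ y. ennreal (exp (\<bar>c\<bar>/b)) * indicator A (x(i := y + c)) \<partial>lap b) \<partial>PiM J (\<lambda>_. lap b))"
  proof (rule nn_integral_mono)
    fix x assume x: "x \<in> space (PiM J (\<lambda>_. lap b))"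
    have m: "(\<lambda>y. x(i := y)) \<in> measurable (lap b) (PiM (insert i J) (\<lambda>_. lap b))"
      using x iJ by (intro measurable_component_update) auto
    have "(\<lambda>y. indicator A (x(i := y)) :: ennreal) \<in> borel_measurable borel"
      using measurable_comp[OF m borel_measurable_indicator[OF A']]
      by (simp add: comp_def lap_lg cong: measurable_cong_sets)
    from lap_shift_nn[OF b this, of c]
    have "(\<integral>\<^sup>+ y. indicator A (x(i := y)) \<partial>lap b) \<le> ennreal (exp (\<bar>c\<bar>/b)) * (\<integral>\<^sup>+ y. indicator A (x(i := y + c)) \<partial>lap b)"
      by simp
    also have "\<dots> = (\<integral>\<^sup>+ y. ennreal (exp (\<bar>c\<bar>/b)) * indicator A (x(i := y + c)) \<partial>lap b)"
    proof (rule nn_integral_cmult[symmetric])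
      have "(\<lambda>y. y + c) \<in> measurable (lap b) (lap b)" by (simp add: lap_lg)
      from measurable_comp[OF this measurable_comp[OF m borel_measurable_indicator[OF A']]]
      show "(\<lambda>y. indicator A (x(i := y + c)) :: ennreal) \<in> borel_measurable (lap b)"
        by (simp add: comp_def)
    qed
    finally show "(\<integral>\<^sup>+ y. indicator A (x(i := y)) \<partial>lap b) \<le> (\<integral>\<^sup>+ y. ennreal (exp (\<bar>c\<bar>/b)) * indicator A (x(i := y + c)) \<partial>lap b)" .
  qed
  also have "\<dots> = (\<integral>\<^sup>+ \<eta>. ennreal (exp (\<bar>c\<bar>/b)) * indicator A (?T \<eta>) \<partial>P)"
  proof -
    have "(\<lambda>\<eta>. ennreal (exp (\<bar>c\<bar>/b)) * indicator A (?T \<eta>)) \<in> borel_measurable P"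
    proof -
      have mi: "(\<lambda>\<eta>. indicator A (?T \<eta>) :: ennreal) \<in> borel_measurable P"
        using measurable_comp[OF Tm borel_measurable_indicator[OF A]] by (simp add: comp_def)
      then show ?thesis by measurable
    qed
    then show ?thesis
      unfolding P_def IJ using fJ iJ by (subst PS.product_nn_integral_insert) auto
  qed
  also have "\<dots> = ennreal (exp (\<bar>c\<bar>/b)) * (\<integral>\<^sup>+ \<eta>. indicator A (?T \<eta>) \<partial>P)"
    using measurable_comp[OF Tm borel_measurable_indicator[OF A]]
    by (intro nn_integral_cmult) (simp add: comp_def)
  also have "(\<integral>\<^sup>+ \<eta>. indicator A (?T \<eta>) \<partial>P) = emeasure P (?T -` A \<inter> space P)"
  proof -
    have "(\<integral>\<^sup>+ \<eta>. indicator A (?T \<eta>) \<partial>P) = (\<integral>\<^sup>+ \<eta>. indicator (?T -` A \<inter> space P) \<eta> \<partial>P)"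
      by (intro nn_integral_cong) (auto split: split_indicator)
    also have "\<dots> = emeasure P (?T -` A \<inter> space P)"
      using measurable_sets[OF Tm A] by simp
    finally show ?thesis .
  qed
  finally show ?thesis .
qed

lemma sets_noise: "sets (noise k \<epsilon>) = sets (PiM {1..<k} (\<lambda>_. lborel))"
  unfolding noise_def by (rule sets_PiM_cong) (auto simp: lap_lg)

lemma space_noise: "space (noise k \<epsilon>) = space (PiM {1..<k} (\<lambda>_. lborel))"
  using sets_noise by (rule sets_eq_imp_space_eq)

lemma meas_noise: "measurable (noise k \<epsilon>) N = measurable (PiM {1..<k} (\<lambda>_. lborel)) N"
  by (rule measurable_cong_sets) (auto simp: sets_noise)

lemma meas_noise2: "measurable N (noise k \<epsilon>) = measurable N (PiM {1..<k} (\<lambda>_. lborel))"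
  by (rule measurable_cong_sets) (auto simp: sets_noise)

lemma prob_noise: "0 < \<epsilon> \<Longrightarrow> prob_space (noise k \<epsilon>)"
  unfolding noise_def by (rule prob_space_PiM) (auto intro: prob_space_lap)

definition F :: "nat \<Rightarrow> (nat \<Rightarrow> real) \<Rightarrow> (nat \<Rightarrow> real) \<Rightarrow> (nat \<times> nat \<Rightarrow> real)" where
  "F k x \<eta> = (\<lambda>q\<in>range_queries k. noisy_prefix k x \<eta> (snd q) - noisy_prefix k x \<eta> (fst q - 1))"

lemma mech_F: "prefix_mech k \<epsilon> x = distr (noise k \<epsilon>) (answer_space k) (F k x)"
  unfolding prefix_mech_def F_def ..

lemma noisy_meas: "j \<le> k \<Longrightarrow> (\<lambda>\<eta>. noisy_prefix k x \<eta> j) \<in> borel_measurable (PiM {1..<k} (\<lambda>_. lborel))"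
proof (cases "j = 0 \<or> j = k")
  case True
  then have "(\<lambda>\<eta>. noisy_prefix k x \<eta> j) = (\<lambda>_. noisy_prefix k x (\<lambda>_. 0) j)"
    by (auto simp: noisy_prefix_def)
  then show ?thesis by simp
next
  case False
  assume "j \<le> k"
  with False have j: "j \<in> {1..<k}" by auto
  have "(\<lambda>\<eta>. noisy_prefix k x \<eta> j) = (\<lambda>\<eta>. prefix_sum x j + \<eta> j)"
    using False unfolding noisy_prefix_def by auto
  moreover have "(\<lambda>\<eta>::nat\<Rightarrow>real. \<eta> j) \<in> borel_measurable (PiM {1..<k} (\<lambda>_. lborel))"
    using measurable_component_singleton[OF j, of "\<lambda>_. lborel"] by simp
  ultimately show ?thesis by simp
qed

lemma F_meas: "F k x \<in> measurable (noise k \<epsilon>) (answer_space k)"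
  unfolding meas_noise F_def answer_space_def
proof (rule measurable_restrict)
  fix q assume q: "q \<in> range_queries k"
  then have "snd q \<le> k" "fst q - 1 \<le> k" by (auto simp: range_queries_def)
  then show "(\<lambda>\<eta>. noisy_prefix k x \<eta> (snd q) - noisy_prefix k x \<eta> (fst q - 1)) \<in> measurable (PiM {1..<k} (\<lambda>_. lborel)) lborel"
    unfolding measurable_lborel2 using noisy_meas by measurable
qed

lemma T_meas: "i \<in> I \<Longrightarrow> (\<lambda>\<eta>::nat\<Rightarrow>real. \<eta>(i := \<eta> i + c)) \<in> measurable (PiM I (\<lambda>_. lborel)) (PiM I (\<lambda>_. lborel))"
proof (rule measurable_PiM_single')
  fix j assume "j \<in> I" "i \<in> I"
  then show "(\<lambda>\<eta>. (\<eta>(i := \<eta> i + c)) j) \<in> measurable (PiM I (\<lambda>_. lborel)) lborel"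
    by (cases "j = i") auto
next
  assume "i \<in> I"
  then show "(\<lambda>\<eta> j. (\<eta>(i := \<eta> i + c)) j) \<in> space (PiM I (\<lambda>_. lborel)) \<rightarrow> (\<Pi>\<^sub>E j\<in>I. space lborel)"
    by (auto simp: space_PiM PiE_iff)
qed

lemma prefix_move:
  assumes i: "1 \<le> i" "i < k"
  shows "noisy_prefix k (x(i := x i - 1, Suc i := x (Suc i) + 1)) \<eta> j
       = noisy_prefix k x (\<eta>(i := \<eta> i + -1)) j"
proof -
  let ?x' = "x(i := x i - 1, Suc i := x (Suc i) + 1)"
  have ps: "prefix_sum ?x' j = prefix_sum x j + (if i \<le> j then -1 else 0) + (if Suc i \<le> j then 1 else 0)" for j
  proof -
    have "prefix_sum ?x' j = (\<Sum>m=1..j. x m + (if m = i then -1 else 0) + (if m = Suc i then 1 else 0))"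
      unfolding prefix_sum_def by (intro sum.cong) auto
    also have "\<dots> = prefix_sum x j + (\<Sum>m=1..j. (if m = i then -1 else 0)) + (\<Sum>m=1..j. (if m = Suc i then 1 else 0))"
      unfolding prefix_sum_def by (simp add: sum.distrib)
    also have "\<dots> = prefix_sum x j + (if i \<le> j then -1 else 0) + (if Suc i \<le> j then 1 else 0)"
      using i by (simp add: sum.delta)
    finally show ?thesis .
  qed
  have ds: "db_size k ?x' = db_size k x"
    using ps[of k] i unfolding db_size_def prefix_sum_def by simp
  show ?thesis
    unfolding noisy_prefix_def using i
    by (auto simp: ds ps)
qed

lemma F_move:
  assumes i: "1 \<le> i" "i < k"
  shows "F k (x(i := x i - 1, Suc i := x (Suc i) + 1)) \<eta> = F k x (\<eta>(i := \<eta> i + -1))"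
  unfolding F_def using prefix_move[OF i] by simp

lemma T_space: "i \<in> I \<Longrightarrow> \<eta> \<in> space (PiM I (\<lambda>_. lborel)) \<Longrightarrow> \<eta>(i := \<eta> i + c) \<in> space (PiM I (\<lambda>_. lborel))"
  by (auto simp: space_PiM PiE_iff extensional_def)

lemma priv_pair:
  fixes x :: "nat \<Rightarrow> real"
  assumes e: "0 < \<epsilon>" and i: "1 \<le> i" "i < k" and S: "S \<in> sets (answer_space k)"
  defines "x' \<equiv> x(i := x i - 1, Suc i := x (Suc i) + 1)"
  shows "measure (prefix_mech k \<epsilon> x) S \<le> exp \<epsilon> * measure (prefix_mech k \<epsilon> x') S"
    and "measure (prefix_mech k \<epsilon> x') S \<le> exp \<epsilon> * measure (prefix_mech k \<epsilon> x) S"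
proof -
  let ?N = "noise k \<epsilon>"
  let ?T = "\<lambda>c. \<lambda>\<eta>::nat\<Rightarrow>real. \<eta>(i := \<eta> i + c)"
  have iI: "i \<in> {1..<k}" using i by auto
  interpret N: prob_space ?N by (rule prob_noise[OF e])
  have Tm: "?T c \<in> measurable ?N ?N" for c
    unfolding meas_noise meas_noise2 using T_meas[OF iI] .
  have Ts: "\<eta> \<in> space ?N \<Longrightarrow> ?T c \<eta> \<in> space ?N" for c \<eta>
    unfolding space_noise using T_space[OF iI] .
  have Fm: "F k x \<in> measurable ?N (answer_space k)" by (rule F_meas)
  define A where "A = F k x -` S \<inter> space ?N"
  have A: "A \<in> sets ?N" unfolding A_def using measurable_sets[OF Fm S] .
  have ee: "exp (\<bar>c\<bar> / (1/\<epsilon>)) = exp \<epsilon>" if "\<bar>c\<bar> = 1" for c using that by simp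
  have shift: "emeasure ?N B \<le> ennreal (exp \<epsilon>) * emeasure ?N (?T c -` B \<inter> space ?N)"
    if "B \<in> sets ?N" "\<bar>c\<bar> = 1" for B c
    using noise_shift[of "{1..<k}" i "1/\<epsilon>" B c] that iI e
    unfolding noise_def[symmetric] by (simp add: ee)
  have eq1: "emeasure (prefix_mech k \<epsilon> x) S = emeasure ?N A"
    unfolding mech_F A_def using Fm S by (simp add: emeasure_distr)
  have eq2: "emeasure (prefix_mech k \<epsilon> x') S = emeasure ?N (?T (-1) -` A \<inter> space ?N)"
  proof -
    have "prefix_mech k \<epsilon> x' = distr ?N (answer_space k) (\<lambda>\<eta>. F k x (?T (-1) \<eta>))"
    proof -
      have "F k x' = (\<lambda>\<eta>. F k x (?T (-1) \<eta>))"
        by (rule ext, unfold x'_def, rule F_move[OF i])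
      then show ?thesis unfolding mech_F by simp
    qed
    moreover have "(\<lambda>\<eta>. F k x (?T (-1) \<eta>)) \<in> measurable ?N (answer_space k)"
      using measurable_comp[OF Tm[of "-1"] Fm] by (simp add: comp_def)
    moreover have "(\<lambda>\<eta>. F k x (?T (-1) \<eta>)) -` S \<inter> space ?N = ?T (-1) -` A \<inter> space ?N"
      unfolding A_def using Ts[of _ "-1", simplified] by auto
    ultimately show ?thesis using S by (simp add: emeasure_distr)
  qed
  interpret M1: prob_space "prefix_mech k \<epsilon> x"
    unfolding mech_F by (rule N.prob_space_distr[OF Fm])
  interpret M2: prob_space "prefix_mech k \<epsilon> x'"
    unfolding mech_F by (rule N.prob_space_distr[OF F_meas])
  have conv: "measure M S \<le> exp \<epsilon> * measure M' S"
    if "emeasure M S \<le> ennreal (exp \<epsilon>) * emeasure M' S" "finite_measure M" "finite_measure M'" for M M' :: "(nat \<times> nat \<Rightarrow> real) measure"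
  proof -
    have "ennreal (measure M S) \<le> ennreal (exp \<epsilon> * measure M' S)"
      using that by (simp add: finite_measure.emeasure_eq_measure ennreal_mult)
    then show ?thesis by (simp add: ennreal_le_iff)
  qed
  show "measure (prefix_mech k \<epsilon> x) S \<le> exp \<epsilon> * measure (prefix_mech k \<epsilon> x') S"
    by (rule conv) (use shift[OF A, of "-1"] eq1 eq2 in auto, unfold_locales)
  have TA: "?T (-1) -` A \<inter> space ?N \<in> sets ?N" using measurable_sets[OF Tm A] .
  have "?T 1 -` (?T (-1) -` A \<inter> space ?N) \<inter> space ?N = A"
    using Ts A sets.sets_into_space[OF A] by auto
  then show "measure (prefix_mech k \<epsilon> x') S \<le> exp \<epsilon> * measure (prefix_mech k \<epsilon> x) S"
    by (intro conv) (use shift[OF TA, of 1] eq1 eq2 in auto, unfold_locales)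
qed

lemma privacy: "k \<ge> 1 \<Longrightarrow> \<epsilon> > 0 \<Longrightarrow> blowfish_private \<epsilon> (line_neighbors k) (prefix_mech k \<epsilon>)"
  unfolding blowfish_private_def line_neighbors_def mech_F
  using priv_pair[unfolded mech_F] by (auto simp: sets_distr)

lemma moment_sq:
  fixes I :: "nat set"
  assumes I: "finite I" "j \<in> I" and b: "0 < b"
  shows "integrable (PiM I (\<lambda>_. lap b)) (\<lambda>\<eta>. (\<eta> j)\<^sup>2)"
    and "integral\<^sup>L (PiM I (\<lambda>_. lap b)) (\<lambda>\<eta>. (\<eta> j)\<^sup>2) = 2 * b\<^sup>2"
proof -
  interpret L: prob_space "lap b" by (rule prob_space_lap[OF b])
  interpret PS: product_sigma_finite "\<lambda>_. lap b"
    unfolding product_sigma_finite_def using prob_space_lap[OF b]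
    by (simp add: prob_space_imp_sigma_finite)
  let ?f = "\<lambda>m (t::real). if m = j then t\<^sup>2 else 1"
  have fi: "integrable (lap b) (?f m)" for m
    using lap_integrable_sq[OF b] L.integrable_const by (cases "m = j") auto
  have eq: "(\<lambda>\<eta>::nat\<Rightarrow>real. (\<eta> j)\<^sup>2) = (\<lambda>\<eta>. \<Prod>m\<in>I. ?f m (\<eta> m))"
    using I by (auto simp: prod.delta prod.delta)
  show "integrable (PiM I (\<lambda>_. lap b)) (\<lambda>\<eta>. (\<eta> j)\<^sup>2)"
    unfolding eq by (rule PS.product_integrable_prod[OF I(1) fi])
  have "integral\<^sup>L (PiM I (\<lambda>_. lap b)) (\<lambda>\<eta>. \<Prod>m\<in>I. ?f m (\<eta> m)) = (\<Prod>m\<in>I. integral\<^sup>L (lap b) (?f m))"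
    by (rule PS.product_integral_prod[OF I(1) fi])
  also have "\<dots> = (\<Prod>m\<in>I. if m = j then 2 * b\<^sup>2 else 1)"
    using lap_integral_sq[OF b] L.prob_space by (intro prod.cong) auto
  also have "\<dots> = 2 * b\<^sup>2" using I by (simp add: prod.delta)
  finally show "integral\<^sup>L (PiM I (\<lambda>_. lap b)) (\<lambda>\<eta>. (\<eta> j)\<^sup>2) = 2 * b\<^sup>2" unfolding eq .
qed

lemma moment_cross:
  fixes I :: "nat set"
  assumes I: "finite I" "j \<in> I" "j' \<in> I" "j \<noteq> j'" and b: "0 < b"
  shows "integrable (PiM I (\<lambda>_. lap b)) (\<lambda>\<eta>. \<eta> j * \<eta> j')"
    and "integral\<^sup>L (PiM I (\<lambda>_. lap b)) (\<lambda>\<eta>. \<eta> j * \<eta> j') = 0"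
proof -
  interpret L: prob_space "lap b" by (rule prob_space_lap[OF b])
  interpret PS: product_sigma_finite "\<lambda>_. lap b"
    unfolding product_sigma_finite_def using prob_space_lap[OF b]
    by (simp add: prob_space_imp_sigma_finite)
  let ?f = "\<lambda>m (t::real). if m \<in> {j, j'} then t else 1"
  have fi: "integrable (lap b) (?f m)" for m
    using lap_integrable_lin[OF b] L.integrable_const by (cases "m \<in> {j, j'}") auto
  have eq: "(\<lambda>\<eta>::nat\<Rightarrow>real. \<eta> j * \<eta> j') = (\<lambda>\<eta>. \<Prod>m\<in>I. ?f m (\<eta> m))"
  proof
    fix \<eta> :: "nat \<Rightarrow> real"
    have "(\<Prod>m\<in>I. ?f m (\<eta> m)) = (\<Prod>m\<in>I \<inter> {j, j'}. \<eta> m)"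
      using I by (subst prod.inter_restrict) (auto intro!: prod.cong)
    also have "I \<inter> {j, j'} = {j, j'}" using I by auto
    finally show "\<eta> j * \<eta> j' = (\<Prod>m\<in>I. ?f m (\<eta> m))" using I by simp
  qed
  show "integrable (PiM I (\<lambda>_. lap b)) (\<lambda>\<eta>. \<eta> j * \<eta> j')"
    unfolding eq by (rule PS.product_integrable_prod[OF I(1) fi])
  have "integral\<^sup>L (PiM I (\<lambda>_. lap b)) (\<lambda>\<eta>. \<Prod>m\<in>I. ?f m (\<eta> m)) = (\<Prod>m\<in>I. integral\<^sup>L (lap b) (?f m))"
    by (rule PS.product_integral_prod[OF I(1) fi])
  also have "\<dots> = 0"
    using I lap_integral_lin[OF b] by (intro prod_zero bexI[of _ j]) auto
  finally show "integral\<^sup>L (PiM I (\<lambda>_. lap b)) (\<lambda>\<eta>. \<eta> j * \<eta> j') = 0" unfolding eq .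
qed

lemma moment_diff:
  fixes I :: "nat set"
  assumes I: "finite I" "j \<in> I" "j' \<in> I" "j \<noteq> j'" and b: "0 < b"
  shows "integral\<^sup>L (PiM I (\<lambda>_. lap b)) (\<lambda>\<eta>. (\<eta> j - \<eta> j')\<^sup>2) = 4 * b\<^sup>2"
proof -
  let ?P = "PiM I (\<lambda>_. lap b)"
  have "(\<lambda>\<eta>::nat\<Rightarrow>real. (\<eta> j - \<eta> j')\<^sup>2) = (\<lambda>\<eta>. ((\<eta> j)\<^sup>2 + (\<eta> j')\<^sup>2) - 2 * (\<eta> j * \<eta> j'))"
    by (auto simp: power2_eq_square algebra_simps)
  then have "integral\<^sup>L ?P (\<lambda>\<eta>. (\<eta> j - \<eta> j')\<^sup>2)
      = integral\<^sup>L ?P (\<lambda>\<eta>. ((\<eta> j)\<^sup>2 + (\<eta> j')\<^sup>2) - 2 * (\<eta> j * \<eta> j'))" by simp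
  also have "\<dots> = (integral\<^sup>L ?P (\<lambda>\<eta>. (\<eta> j)\<^sup>2) + integral\<^sup>L ?P (\<lambda>\<eta>. (\<eta> j')\<^sup>2)) - 2 * integral\<^sup>L ?P (\<lambda>\<eta>. \<eta> j * \<eta> j')"
    using moment_sq(1)[OF I(1,2) b] moment_sq(1)[OF I(1,3) b] moment_cross(1)[OF I b]
    by (simp add: integral_diff integral_add)
  also have "\<dots> = 4 * b\<^sup>2"
    using moment_sq(2)[OF I(1,2) b] moment_sq(2)[OF I(1,3) b] moment_cross(2)[OF I b] by simp
  finally show ?thesis .
qed

definition ee :: "nat \<Rightarrow> (nat \<Rightarrow> real) \<Rightarrow> nat \<Rightarrow> real" where
  "ee k \<eta> j = (if j = 0 \<or> j = k then 0 else \<eta> j)"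

lemma noisy_ee: "noisy_prefix k x \<eta> j = prefix_sum x j + ee k \<eta> j"
  unfolding noisy_prefix_def ee_def db_size_def prefix_sum_def by auto

lemma range_prefix:
  assumes "1 \<le> l" "l \<le> r"
  shows "range_query l r x = prefix_sum x r - prefix_sum x (l - 1)"
proof -
  have "prefix_sum x r = (\<Sum>i=1..<l. x i) + (\<Sum>i=l..<Suc r. x i)"
    unfolding prefix_sum_def atLeastLessThanSuc_atLeastAtMost[symmetric]
    using assms by (subst sum.atLeastLessThan_concat) auto
  moreover have "{1..l - 1} = {1..<l}" using assms by auto
  ultimately show ?thesis
    unfolding range_query_def prefix_sum_def atLeastLessThanSuc_atLeastAtMost by simp
qed

definition vv :: "nat \<Rightarrow> real \<Rightarrow> nat \<Rightarrow> nat \<Rightarrow> real" where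
  "vv k \<epsilon> l r = (if r \<noteq> k then 2 / \<epsilon>\<^sup>2 else 0) + (if l \<noteq> 1 then 2 / \<epsilon>\<^sup>2 else 0)"

lemma err_q:
  assumes e: "0 < \<epsilon>" and q: "(l, r) \<in> range_queries k"
  shows "(\<integral>y. (range_query l r x - y (l, r))\<^sup>2 \<partial>prefix_mech k \<epsilon> x) = vv k \<epsilon> l r"
proof -
  let ?N = "noise k \<epsilon>"
  let ?I = "{1..<k}"
  have lr: "1 \<le> l" "l \<le> r" "r \<le> k" using q by (auto simp: range_queries_def)
  have b: "0 < 1/\<epsilon>" using e by simp
  have "(\<integral>y. (range_query l r x - y (l, r))\<^sup>2 \<partial>prefix_mech k \<epsilon> x)
      = (\<integral>\<eta>. (range_query l r x - F k x \<eta> (l, r))\<^sup>2 \<partial>?N)"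
    unfolding mech_F
  proof (rule integral_distr[OF F_meas])
    show "(\<lambda>y. (range_query l r x - y (l, r))\<^sup>2) \<in> borel_measurable (answer_space k)"
      unfolding answer_space_def using q by measurable
  qed
  also have "\<dots> = (\<integral>\<eta>. (ee k \<eta> r - ee k \<eta> (l - 1))\<^sup>2 \<partial>?N)"
    unfolding F_def
    by (intro Bochner_Integration.integral_cong refl) (use q lr in \<open>simp add: noisy_ee range_prefix power2_eq_square algebra_simps\<close>)
  also have "\<dots> = vv k \<epsilon> l r"
  proof (cases "r = k")
    case rk: True
    show ?thesis
    proof (cases "l = 1")
      case True
      then show ?thesis using rk by (simp add: ee_def vv_def)
    next
      case False
      then have j: "l - 1 \<in> ?I" using lr by auto
      have "(\<integral>\<eta>. (ee k \<eta> r - ee k \<eta> (l - 1))\<^sup>2 \<partial>?N) = (\<integral>\<eta>. (\<eta> (l - 1))\<^sup>2 \<partial>?N)"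
        by (intro Bochner_Integration.integral_cong refl) (use rk False lr in \<open>auto simp: ee_def\<close>)
      also have "\<dots> = 2 * (1/\<epsilon>)\<^sup>2"
        unfolding noise_def by (rule moment_sq(2)[OF _ j b]) simp
      finally show ?thesis using rk False by (simp add: vv_def power_one_over)
    qed
  next
    case rk: False
    have jr: "r \<in> ?I" using rk lr by auto
    show ?thesis
    proof (cases "l = 1")
      case True
      have "(\<integral>\<eta>. (ee k \<eta> r - ee k \<eta> (l - 1))\<^sup>2 \<partial>?N) = (\<integral>\<eta>. (\<eta> r)\<^sup>2 \<partial>?N)"
        by (intro Bochner_Integration.integral_cong refl) (use rk True lr in \<open>auto simp: ee_def\<close>)
      also have "\<dots> = 2 * (1/\<epsilon>)\<^sup>2"
        unfolding noise_def by (rule moment_sq(2)[OF _ jr b]) simp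
      finally show ?thesis using rk True by (simp add: vv_def power_one_over)
    next
      case False
      then have j: "l - 1 \<in> ?I" using lr by auto
      have "(\<integral>\<eta>. (ee k \<eta> r - ee k \<eta> (l - 1))\<^sup>2 \<partial>?N) = (\<integral>\<eta>. (\<eta> r - \<eta> (l - 1))\<^sup>2 \<partial>?N)"
        by (intro Bochner_Integration.integral_cong refl) (use rk False lr in \<open>auto simp: ee_def\<close>)
      also have "\<dots> = 4 * (1/\<epsilon>)\<^sup>2"
        unfolding noise_def using lr False by (intro moment_diff[OF _ jr j _ b]) auto
      finally show ?thesis using rk False by (simp add: vv_def power_one_over)
    qed
  qed
  finally show ?thesis .
qed

lemma fin_R: "finite (range_queries k)"
  by (rule finite_subset[of _ "{1..k} \<times> {1..k}"]) (auto simp: range_queries_def)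

lemma epq: assumes e: "0 < \<epsilon>"
  shows "error_per_query k \<epsilon> = (\<Sum>q\<in>range_queries k. vv k \<epsilon> (fst q) (snd q)) / real (card (range_queries k))"
proof -
  have "(\<Sum>q\<in>range_queries k. \<integral>y. (range_query (fst q) (snd q) x - y q)\<^sup>2 \<partial>prefix_mech k \<epsilon> x)
     = (\<Sum>q\<in>range_queries k. vv k \<epsilon> (fst q) (snd q))" for x
    by (intro sum.cong refl) (use err_q[OF e] in force)
  then show ?thesis unfolding error_per_query_def by simp
qed

lemma vv_bounds: "0 < \<epsilon> \<Longrightarrow> vv k \<epsilon> l r \<le> 4 / \<epsilon>\<^sup>2"
  "0 < \<epsilon> \<Longrightarrow> (l, r) \<noteq> (1, k) \<Longrightarrow> 2 / \<epsilon>\<^sup>2 \<le> vv k \<epsilon> l r"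
  by (auto simp: vv_def intro: divide_right_mono)

lemma err_bounds:
  assumes k: "2 \<le> k" and e: "0 < \<epsilon>"
  shows "1 / \<epsilon>\<^sup>2 \<le> error_per_query k \<epsilon>" "error_per_query k \<epsilon> \<le> 4 / \<epsilon>\<^sup>2"
proof -
  let ?R = "range_queries k"
  let ?S = "\<Sum>q\<in>?R. vv k \<epsilon> (fst q) (snd q)"
  have in1: "(1, k) \<in> ?R" "(1, 1) \<in> ?R" using k by (auto simp: range_queries_def)
  have c2: "2 \<le> card ?R"
  proof -
    have "{(1, k), (1, 1)} \<subseteq> ?R" using in1 by auto
    from card_mono[OF fin_R this] k show ?thesis by simp
  qed
  have cpos: "0 < real (card ?R)" using c2 by simp
  have "?S \<le> (\<Sum>q\<in>?R. 4 / \<epsilon>\<^sup>2)"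
    using vv_bounds(1)[OF e] by (intro sum_mono) auto
  then have up: "?S \<le> real (card ?R) * (4 / \<epsilon>\<^sup>2)" by simp
  show "error_per_query k \<epsilon> \<le> 4 / \<epsilon>\<^sup>2"
    unfolding epq[OF e] using up cpos by (simp add: divide_le_eq mult.commute)
  have "(\<Sum>q\<in>?R. if q = (1, k) then 0 else 2 / \<epsilon>\<^sup>2) \<le> ?S"
    using vv_bounds[OF e] e by (intro sum_mono) (auto simp: vv_def)
  moreover have "(\<Sum>q\<in>?R. if q = (1, k) then 0 else 2 / \<epsilon>\<^sup>2) = real (card ?R - 1) * (2 / \<epsilon>\<^sup>2)"
    using fin_R in1 by (simp add: sum.If_cases card_Diff_singleton Diff_eq[symmetric] Int_absorb2 )
  ultimately have lo: "real (card ?R - 1) * (2 / \<epsilon>\<^sup>2) \<le> ?S" by simp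
  have "real (card ?R) * (1 / \<epsilon>\<^sup>2) \<le> real (card ?R - 1) * (2 / \<epsilon>\<^sup>2)"
    using c2 e by (simp add: of_nat_diff field_simps)
  with lo have "real (card ?R) * (1 / \<epsilon>\<^sup>2) \<le> ?S" by linarith
  then show "1 / \<epsilon>\<^sup>2 \<le> error_per_query k \<epsilon>"
    unfolding epq[OF e] using cpos by (simp add: le_divide_eq mult.commute)
qed


theorem theorem5p2:
  shows "(\<forall>k \<ge> 1. \<forall>\<epsilon> > 0. blowfish_private \<epsilon> (line_neighbors k) (prefix_mech k \<epsilon>))
       \<and> (\<exists>c1 c2. 0 < c1 \<and> 0 < c2 \<and>
            (\<forall>k \<ge> 2. \<forall>\<epsilon> > 0.
               c1 / \<epsilon>\<^sup>2 \<le> error_per_query k \<epsilon> \<and> error_per_query k \<epsilon> \<le> c2 / \<epsilon>\<^sup>2))"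
proof (rule conjI)
  show "\<forall>k \<ge> 1. \<forall>\<epsilon> > 0. blowfish_private \<epsilon> (line_neighbors k) (prefix_mech k \<epsilon>)"
    using privacy by blast
  show "\<exists>c1 c2. 0 < c1 \<and> 0 < c2 \<and>
            (\<forall>k \<ge> 2. \<forall>\<epsilon> > 0.
               c1 / \<epsilon>\<^sup>2 \<le> error_per_query k \<epsilon> \<and> error_per_query k \<epsilon> \<le> c2 / \<epsilon>\<^sup>2)"
    by (rule exI[of _ 1], rule exI[of _ 4]) (use err_bounds in auto)
qed

end
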